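(* Let $s\ge1$ be an integer and $c=N/D$ a rational with $1/(s+1)<c<1/s$ ($N,D$ positive integers). Put $a=(s+1-1/c)N$ and $b=(1/c-s)N$ (positive integers, assuming these are integral, e.g. after scaling $N,D$). For $p\in[0,1]$ let $g_p(x,y)=p\bigl(1-(1-x)^s\bigr)+(1-p)\bigl(1-(1-y)^{s+1}\bigr)$. Then there exists $p\in[0,1]$ such that $$\max\Bigl\{g_p(x,y):0\le x,y\le1,\ \tfrac{a}{a+b}\,s\,x+\tfrac{b}{a+b}\,(s+1)\,y=1\Bigr\}=\rho(c).$$
   Context: Definition of $\rho(c)$ for $1/(s+1)<c<1/s$: with $\sigma(\alpha,m)=\bigl(1-\alpha c-(1-\alpha)/m\bigr)^m$, there is a unique $\alpha^*\in(0,1)$ with $\sigma(\alpha^*,s)=\sigma(\alpha^*,s+1)$, and $\rho(c)=1-\sigma(\alpha^*,s)$. *)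

theory Defs
  imports Complex_Main
begin

definition sigma :: "real \<Rightarrow> real \<Rightarrow> nat \<Rightarrow> real" where
  "sigma c \<alpha> m = (1 - \<alpha> * c - (1 - \<alpha>) / real m) ^ m"

definition alpha_star :: "nat \<Rightarrow> real \<Rightarrow> real" where
  "alpha_star s c = (THE \<alpha>. 0 < \<alpha> \<and> \<alpha> < 1 \<and> sigma c \<alpha> s = sigma c \<alpha> (s + 1))"

definition rho :: "nat \<Rightarrow> real \<Rightarrow> real" where
  "rho s c = 1 - sigma c (alpha_star s c) s"

definition g :: "nat \<Rightarrow> real \<Rightarrow> real \<Rightarrow> real \<Rightarrow> real" where
  "g s p x y = p * (1 - (1 - x) ^ s) + (1 - p) * (1 - (1 - y) ^ (s + 1))"

end

theory Submission imports Defs begin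

lemma tangent:
  fixes u v :: real and n :: nat
  assumes "u \<ge> 0" "v > 0"
  shows "v ^ n + real n * v ^ (n - 1) * (u - v) \<le> u ^ n"
proof (cases n)
  case 0 then show ?thesis by simp
next
  case (Suc m)
  have "1 + real n * (u / v - 1) \<le> (1 + (u / v - 1)) ^ n"
    by (rule Bernoulli_inequality) (use assms in \<open>simp add: field_simps\<close>)
  then have "1 + real n * (u / v - 1) \<le> (u / v) ^ n" by simp
  then have "v ^ n * (1 + real n * (u / v - 1)) \<le> v ^ n * (u / v) ^ n"
    using assms by (intro mult_left_mono) auto
  also have "\<dots> = u ^ n" using assms by (simp add: power_divide)
  also have "v ^ n * (1 + real n * (u / v - 1)) = v ^ n + real n * v ^ (n - 1) * (u - v)"
    using assms Suc by (simp add: field_simps)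
  finally show ?thesis .
qed

lemma f0neg:
  fixes s :: nat assumes "s \<ge> 1"
  shows "(1 - 1 / real s) ^ s < (1 - 1 / real (s + 1)) ^ (s + 1)"
proof (cases "s = 1")
  case True then show ?thesis by simp
next
  case False
  define r where "r = real s"
  have r2: "r \<ge> 2" using assms False unfolding r_def by simp
  have rr: "r * r \<ge> 2 * 2" using r2 by (intro mult_mono) auto
  define q where "q = ((r - 1) / r) ^ s"
  have qpos: "q > 0" using r2 unfolding q_def by simp
  have e1: "1 - 1 / real s = (r - 1) / r" using r2 unfolding r_def by (simp add: field_simps)
  have e2: "1 - 1 / real (s + 1) = r / (r + 1)" using r2 unfolding r_def by (simp add: field_simps)
  have e3: "r / (r + 1) = (r - 1) / r * (1 + 1 / (r^2 - 1))"
    using r2 rr by (simp add: field_simps power2_eq_square)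
  have B: "1 + real s * (1 / (r^2 - 1)) \<le> (1 + 1 / (r^2 - 1)) ^ s"
    by (rule Bernoulli_inequality) (use r2 rr in \<open>simp add: field_simps power2_eq_square\<close>)
  have "(r / (r + 1)) ^ (s + 1) = r / (r + 1) * (q * (1 + 1 / (r^2 - 1)) ^ s)"
  proof -
    have "(r / (r + 1)) ^ s = q * (1 + 1 / (r^2 - 1)) ^ s"
      unfolding q_def by (subst e3, rule power_mult_distrib)
    then show ?thesis by simp
  qed
  also have "\<dots> \<ge> r / (r + 1) * (q * (1 + r / (r^2 - 1)))"
    using B qpos r2 unfolding r_def by (intro mult_left_mono) (auto simp: r_def)
  finally have *: "r / (r + 1) * (q * (1 + r / (r^2 - 1))) \<le> (r / (r + 1)) ^ (s + 1)" .
  have "r / (r + 1) * (1 + r / (r^2 - 1)) > 1"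
  proof -
    have h1: "r^2 - 1 > 0" using rr by (simp add: power2_eq_square)
    have e0: "\<And>t. t > 0 \<Longrightarrow> r / (r + 1) * (1 + r / t) = (r * (t + r)) / ((r + 1) * t)"
      using r2 by (simp add: field_simps)
    note e = e0[OF h1]
    have "(r + 1) * (r^2 - 1) < r * (r^2 - 1 + r)"
      using r2 by (simp add: algebra_simps power2_eq_square)
    moreover have "(r + 1) * (r^2 - 1) > 0" using h1 r2 by simp
    ultimately show ?thesis unfolding e by (simp add: less_divide_eq_1_pos)
  qed
  then have "q * 1 < q * (r / (r + 1) * (1 + r / (r^2 - 1)))"
    using qpos by (intro mult_strict_left_mono) auto
  then have "q < r / (r + 1) * (q * (1 + r / (r^2 - 1)))"
    by (metis mult.left_commute mult_1_right)
  with * show ?thesis unfolding e1 e2 q_def by linarith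
qed
lemma alg:
  fixes A B \<theta> Q P S T X Y :: real
  assumes "A + B \<noteq> 0" "A = \<theta> * Q" "B = (1 - \<theta>) * P"
  shows "A / (A + B) * (S * P * X) + B / (A + B) * (T * Q * Y)
    = (Q * P / (A + B)) * (\<theta> * S * X + (1 - \<theta>) * T * Y)"
proof -
  have "A / (A + B) * (S * P * X) + B / (A + B) * (T * Q * Y)
     = (A * (S * P * X) + B * (T * Q * Y)) / (A + B)"
    by (simp add: add_divide_distrib)
  also have "A * (S * P * X) + B * (T * Q * Y) = (Q * P) * (\<theta> * S * X + (1 - \<theta>) * T * Y)"
    unfolding assms(2,3) by (simp add: algebra_simps)
  finally show ?thesis by simp
qed

theorem mainTheorem9:
  fixes s N D :: nat and c a b :: real
  assumes "s \<ge> 1" and "N > 0" and "D > 0"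
    and "c = real N / real D"
    and "1 / real (s + 1) < c" and "c < 1 / real s"
    and "a = (real s + 1 - 1 / c) * real N"
    and "b = (1 / c - real s) * real N"
    and "a \<in> \<int>" and "b \<in> \<int>"
  shows "\<exists>p. 0 \<le> p \<and> p \<le> 1 \<and>
    (\<exists>x y. 0 \<le> x \<and> x \<le> 1 \<and> 0 \<le> y \<and> y \<le> 1 \<and>
        a / (a + b) * real s * x + b / (a + b) * real (s + 1) * y = 1 \<and>
        g s p x y = rho s c) \<and>
    (\<forall>x y. 0 \<le> x \<and> x \<le> 1 \<and> 0 \<le> y \<and> y \<le> 1 \<and>
        a / (a + b) * real s * x + b / (a + b) * real (s + 1) * y = 1 \<longrightarrow>
        g s p x y \<le> rho s c)"
proof -
  have s0: "real s \<ge> 1" using assms(1) by simp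
  have cpos: "c > 0" using assms(5) le_less_trans[of 0 "1 / real (s + 1)" c] by simp
  have c1: "c < 1" using assms(6) s0
    by (smt (verit) divide_le_eq_1_pos)
  have ic1: "1 / c < real s + 1" using assms(5) cpos
    by (simp add: field_simps)
  have ic2: "real s < 1 / c" using assms(6) cpos s0
    by (simp add: field_simps)
  define \<theta> where "\<theta> = real s + 1 - 1 / c"
  have th0: "0 < \<theta>" "\<theta> < 1" using ic1 ic2 unfolding \<theta>_def by auto
  have ab: "a + b = real N" using assms(7,8) by (simp add: algebra_simps)
  have aab: "a / (a + b) = \<theta>" "b / (a + b) = 1 - \<theta>"
    using assms(2,7,8) unfolding ab \<theta>_def by auto
  define U where "U = (\<lambda>\<alpha>::real. 1 - \<alpha> * c - (1 - \<alpha>) / real s)"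
  define W where "W = (\<lambda>\<alpha>::real. 1 - \<alpha> * c - (1 - \<alpha>) / real (s + 1))"
  define F where "F = (\<lambda>\<alpha>. U \<alpha> ^ s - W \<alpha> ^ (s + 1))"
  have sig1: "\<And>\<alpha>. sigma c \<alpha> s = U \<alpha> ^ s" unfolding sigma_def U_def by simp
  have sig2: "\<And>\<alpha>. sigma c \<alpha> (s + 1) = W \<alpha> ^ (s + 1)" unfolding sigma_def W_def by simp
  have Ulin: "\<And>\<alpha>. U \<alpha> = (1 - 1 / real s) + \<alpha> * (1 / real s - c)"
    unfolding U_def by (simp add: algebra_simps diff_divide_distrib)
  have Wlin: "\<And>\<alpha>. W \<alpha> = (1 - 1 / real (s + 1)) - \<alpha> * (c - 1 / real (s + 1))"
    unfolding W_def by (simp add: algebra_simps diff_divide_distrib)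
  have Umono: "\<And>\<alpha> \<beta>. \<alpha> < \<beta> \<Longrightarrow> U \<alpha> < U \<beta>"
    unfolding Ulin using assms(6) by (simp add: mult_strict_right_mono)
  have Wmono: "\<And>\<alpha> \<beta>. \<alpha> < \<beta> \<Longrightarrow> W \<beta> < W \<alpha>"
    unfolding Wlin using assms(5) by (simp add: mult_strict_right_mono)
  have U0: "U 0 \<ge> 0" unfolding U_def using s0 by simp
  have W1: "W 1 > 0" unfolding W_def using c1 by simp
  have U1: "U 1 = 1 - c" "W 1 = 1 - c" unfolding U_def W_def by simp_all
  have Fmono: "\<And>\<alpha> \<beta>. 0 \<le> \<alpha> \<Longrightarrow> \<alpha> < \<beta> \<Longrightarrow> \<beta> \<le> 1 \<Longrightarrow> F \<alpha> < F \<beta>"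
  proof -
    fix \<alpha> \<beta> :: real assume h: "0 \<le> \<alpha>" "\<alpha> < \<beta>" "\<beta> \<le> 1"
    have Ua: "U \<alpha> \<ge> 0" using U0 Umono[of 0 \<alpha>] h by (cases "\<alpha> = 0") auto
    have Wb: "W \<beta> > 0" using W1 Wmono[of \<beta> 1] h by (cases "\<beta> = 1") auto
    have "U \<alpha> ^ s < U \<beta> ^ s" using Ua Umono[OF h(2)] assms(1)
      by (intro power_strict_mono) auto
    moreover have "W \<beta> ^ (s + 1) < W \<alpha> ^ (s + 1)" using Wb Wmono[OF h(2)]
      by (intro power_strict_mono) auto
    ultimately show "F \<alpha> < F \<beta>" unfolding F_def by simp
  qed
  have F0: "F 0 < 0" using f0neg[OF assms(1)] unfolding F_def U_def W_def by simp
  have F1: "F 1 > 0"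
  proof -
    have "(1 - c) ^ (s + 1) < (1 - c) ^ s"
      using c1 cpos by (intro power_strict_decreasing) auto
    then show ?thesis unfolding F_def U1 by simp
  qed
  have cont: "continuous_on {0..1} F"
    unfolding F_def U_def W_def by (intro continuous_intros) (use assms(1) in auto)
  obtain \<alpha>0 where a0: "0 \<le> \<alpha>0" "\<alpha>0 \<le> 1" "F \<alpha>0 = 0"
    using IVT'[of F 0 0 1, OF _ _ _ cont] F0 F1 by auto
  have a0': "0 < \<alpha>0" "\<alpha>0 < 1" using a0 F0 F1 by (auto simp: less_le)
  have ast: "alpha_star s c = \<alpha>0"
    unfolding alpha_star_def
  proof (rule the_equality)
    show "0 < \<alpha>0 \<and> \<alpha>0 < 1 \<and> sigma c \<alpha>0 s = sigma c \<alpha>0 (s + 1)"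
      using a0' a0(3) unfolding sig1 sig2 F_def by simp
  next
    fix \<beta> assume "0 < \<beta> \<and> \<beta> < 1 \<and> sigma c \<beta> s = sigma c \<beta> (s + 1)"
    then have b: "0 < \<beta>" "\<beta> < 1" "F \<beta> = 0" unfolding sig1 sig2 F_def by auto
    show "\<beta> = \<alpha>0"
    proof (rule ccontr)
      assume "\<beta> \<noteq> \<alpha>0"
      then consider "\<beta> < \<alpha>0" | "\<alpha>0 < \<beta>" by linarith
      then show False
        using Fmono[of \<beta> \<alpha>0] Fmono[of \<alpha>0 \<beta>] a0 a0' b by cases auto
    qed
  qed
  define u0 where "u0 = U \<alpha>0"
  define w0 where "w0 = W \<alpha>0"
  have rho: "rho s c = 1 - u0 ^ s" unfolding rho_def ast sig1 u0_def ..
  have u0pos: "u0 > 0" using Umono[OF a0'(1)] U0 unfolding u0_def by simp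
  have w0pos: "w0 > 0" using Wmono[OF a0'(2)] W1 unfolding w0_def by simp
  have nn1: "\<alpha>0 * c \<ge> 0" "(1 - \<alpha>0) / real s \<ge> 0" "(1 - \<alpha>0) / real (s + 1) \<ge> 0"
    using a0 cpos by auto
  have u0le: "u0 \<le> 1" unfolding u0_def U_def using nn1 by linarith
  have w0le: "w0 \<le> 1" unfolding w0_def W_def using nn1 by linarith
  have eqs: "u0 ^ s = w0 ^ (s + 1)" using a0(3) unfolding F_def u0_def w0_def by simp
  have cs: "\<theta> * real s * (1 - u0) + (1 - \<theta>) * real (s + 1) * (1 - w0) = 1"
  proof -
    have e1: "real s * (1 - u0) = real s * \<alpha>0 * c + (1 - \<alpha>0)"
      unfolding u0_def U_def using s0 by (simp add: field_simps)
    have e2: "real (s + 1) * (1 - w0) = real (s + 1) * \<alpha>0 * c + (1 - \<alpha>0)"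
      unfolding w0_def W_def by (simp add: field_simps)
    have "\<theta> * real s * (1 - u0) + (1 - \<theta>) * real (s + 1) * (1 - w0)
       = (1 - \<alpha>0) + \<alpha>0 * c * (real s + 1 - \<theta>)"
    proof -
      have "\<theta> * real s * (1 - u0) + (1 - \<theta>) * real (s + 1) * (1 - w0)
        = \<theta> * (real s * (1 - u0)) + (1 - \<theta>) * (real (s + 1) * (1 - w0))" by simp
      also have "\<dots> = \<theta> * (real s * \<alpha>0 * c + (1 - \<alpha>0)) + (1 - \<theta>) * (real (s + 1) * \<alpha>0 * c + (1 - \<alpha>0))"
        unfolding e1 e2 ..
      also have "\<dots> = (1 - \<alpha>0) + \<alpha>0 * c * (real s + 1 - \<theta>)"
        by (simp add: algebra_simps)
      finally show ?thesis .
    qed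
    also have "real s + 1 - \<theta> = 1 / c" unfolding \<theta>_def by simp
    finally show ?thesis using cpos by simp
  qed
  define A where "A = \<theta> * w0 ^ s"
  define B where "B = (1 - \<theta>) * u0 ^ (s - 1)"
  have Apos: "A > 0" unfolding A_def using th0 w0pos by simp
  have Bpos: "B > 0" unfolding B_def using th0 u0pos by simp
  define p where "p = A / (A + B)"
  have p01: "0 \<le> p" "p \<le> 1" unfolding p_def using Apos Bpos by auto
  have p1: "1 - p = B / (A + B)" unfolding p_def using Apos Bpos by (simp add: field_simps)
  show ?thesis
  proof (rule exI[of _ p], intro conjI p01)
    show "\<exists>x y. 0 \<le> x \<and> x \<le> 1 \<and> 0 \<le> y \<and> y \<le> 1 \<and>
        a / (a + b) * real s * x + b / (a + b) * real (s + 1) * y = 1 \<and> g s p x y = rho s c"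
    proof (rule exI[of _ "1 - u0"], rule exI[of _ "1 - w0"], intro conjI)
      show "a / (a + b) * real s * (1 - u0) + b / (a + b) * real (s + 1) * (1 - w0) = 1"
        unfolding aab by (rule cs)
      have "g s p (1 - u0) (1 - w0) = p * (1 - u0 ^ s) + (1 - p) * (1 - w0 ^ (s + 1))"
        unfolding g_def by simp
      also have "\<dots> = 1 - u0 ^ s" unfolding eqs[symmetric] by (simp add: algebra_simps)
      finally show "g s p (1 - u0) (1 - w0) = rho s c" unfolding rho .
    qed (use u0pos w0pos u0le w0le in auto)
  next
    show "\<forall>x y. 0 \<le> x \<and> x \<le> 1 \<and> 0 \<le> y \<and> y \<le> 1 \<and>
        a / (a + b) * real s * x + b / (a + b) * real (s + 1) * y = 1 \<longrightarrow> g s p x y \<le> rho s c"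
    proof (intro allI impI)
      fix x y assume h: "0 \<le> x \<and> x \<le> 1 \<and> 0 \<le> y \<and> y \<le> 1 \<and>
        a / (a + b) * real s * x + b / (a + b) * real (s + 1) * y = 1"
      define u where "u = 1 - x"
      define w where "w = 1 - y"
      have u: "u \<ge> 0" "w \<ge> 0" using h unfolding u_def w_def by auto
      have cx: "\<theta> * real s * (1 - u) + (1 - \<theta>) * real (s + 1) * (1 - w) = 1"
        using h unfolding aab u_def w_def by simp
      have lin: "\<theta> * real s * (u - u0) + (1 - \<theta>) * real (s + 1) * (w - w0) = 0"
        using cx cs by (simp add: algebra_simps)
      have T1: "u0 ^ s + real s * u0 ^ (s - 1) * (u - u0) \<le> u ^ s"
        by (rule tangent) (use u u0pos in auto)
      have T2: "w0 ^ (s + 1) + real (s + 1) * w0 ^ (s + 1 - 1) * (w - w0) \<le> w ^ (s + 1)"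
        by (rule tangent) (use u w0pos in auto)
      have gxy: "g s p x y = p * (1 - u ^ s) + (1 - p) * (1 - w ^ (s + 1))"
        unfolding g_def u_def w_def ..
      have "g s p x y \<le> p * (1 - (u0 ^ s + real s * u0 ^ (s - 1) * (u - u0)))
          + (1 - p) * (1 - (w0 ^ (s + 1) + real (s + 1) * w0 ^ s * (w - w0)))"
        unfolding gxy using T1 T2 p01
        by (intro add_mono mult_left_mono) auto
      also have "\<dots> = 1 - u0 ^ s - (p * (real s * u0 ^ (s - 1) * (u - u0))
          + (1 - p) * (real (s + 1) * w0 ^ s * (w - w0)))"
        using eqs by (simp add: algebra_simps)
      also have "p * (real s * u0 ^ (s - 1) * (u - u0))
          + (1 - p) * (real (s + 1) * w0 ^ s * (w - w0))
          = (w0 ^ s * u0 ^ (s - 1) / (A + B)) *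
            (\<theta> * real s * (u - u0) + (1 - \<theta>) * real (s + 1) * (w - w0))"
        unfolding p1 unfolding p_def using alg[of A B \<theta> "w0 ^ s" "u0 ^ (s - 1)"] Apos Bpos A_def B_def by simp
      also have "\<dots> = 0" using lin by simp
      finally show "g s p x y \<le> rho s c" unfolding rho by simp
    qed
  qed
qed

end
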